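(* The set of delay-insensitive gates $\{\textsf{MERGE},\textsf{FORK},\textsf{DUAL},\textsf{CROSS}\}$ can compute any Boolean function using a feed-forward planar circuit with dual-rail encoding.
   Context: Circuits transmit signals along wires with arbitrary (unbounded, unknown) delays; gates are delay-insensitive, i.e. they do not require simultaneity of inputs. The gates: \textsf{MERGE} has two input wires and one output wire and emits a signal on its output when a signal arrives on an input; at most one of its inputs is allowed to carry a signal. \textsf{FORK} has one input and two outputs and splits an incoming signal into two output copies. \textsf{DUAL} has two inputs and one output and produces an output signal once signals have arrived on both inputs. \textsf{CROSS} is a weak wire crossing of two wires, each signal passing straight through; simultaneous signals on both wires are prohibited. Dual-rail encoding represents each Boolean variable $\texttt{I}$ by two wires $\texttt{I}$ and $\neg\texttt{I}$: a signal is sent on wire $\texttt{I}$ if the value is true and on wire $\neg\texttt{I}$ if it is false (exactly one of the two carries a signal). A circuit is feed-forward if it contains no loops, and planar if its wires do not cross (other than through \textsf{CROSS} gates, which are themselves gates of the circuit). *)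

theory Defs
  imports Main
begin

text \<open>
  At every stage the circuit consists of a left-to-right ordered line of
  parallel wires; a gate is placed on adjacent wires of this line (so no wires
  ever cross except inside a CROSS gate, i.e. the circuit is planar), and
  gates are applied in sequence (so the circuit has no loops, i.e. it is
  feed-forward).  The state of a wire is a Boolean: whether a signal is
  (eventually) sent on it.  Since the circuit is feed-forward, every wire
  carries at most one signal and the eventual behaviour is independent of the
  (arbitrary, unknown) delays.  A gate application fails (None) when it is
  placed on non-existing wires or when its usage restriction is violated:
  MERGE must not receive signals on both inputs, and CROSS must not receive
  signals on both wires (with arbitrary delays, these could be simultaneous).
\<close>

datatype gate =
    Merge nat
  | Fork nat
  | Dual nat
  | Cross nat

fun apply_gate :: "gate \<Rightarrow> bool list \<Rightarrow> bool list option" where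
  "apply_gate (Merge i) ws =
     (if Suc i < length ws \<and> \<not> (ws ! i \<and> ws ! Suc i)
      then Some (take i ws @ [ws ! i \<or> ws ! Suc i] @ drop (Suc (Suc i)) ws)
      else None)"
| "apply_gate (Fork i) ws =
     (if i < length ws
      then Some (take i ws @ [ws ! i, ws ! i] @ drop (Suc i) ws)
      else None)"
| "apply_gate (Dual i) ws =
     (if Suc i < length ws
      then Some (take i ws @ [ws ! i \<and> ws ! Suc i] @ drop (Suc (Suc i)) ws)
      else None)"
| "apply_gate (Cross i) ws =
     (if Suc i < length ws \<and> \<not> (ws ! i \<and> ws ! Suc i)
      then Some (take i ws @ [ws ! Suc i, ws ! i] @ drop (Suc (Suc i)) ws)
      else None)"

fun run_circuit :: "gate list \<Rightarrow> bool list \<Rightarrow> bool list option" where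
  "run_circuit [] ws = Some ws"
| "run_circuit (g # gs) ws =
     (case apply_gate g ws of None \<Rightarrow> None | Some ws' \<Rightarrow> run_circuit gs ws')"

definition dual_rail :: "bool list \<Rightarrow> bool list" where
  "dual_rail xs = concat (map (\<lambda>b. [b, \<not> b]) xs)"

end

theory Submission
  imports Defs
begin

fun shg :: "nat \<Rightarrow> gate \<Rightarrow> gate" where
  "shg k (Merge i) = Merge (k+i)"
| "shg k (Fork i) = Fork (k+i)"
| "shg k (Dual i) = Dual (k+i)"
| "shg k (Cross i) = Cross (k+i)"

lemma tk: "i \<le> length ws \<Longrightarrow> take (length P + i) (P @ ws @ S) = P @ take i ws"
  by simp
lemma dr: "i \<le> length ws \<Longrightarrow> drop (length P + i) (P @ ws @ S) = drop i ws @ S"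
  by simp
lemma nt: "i < length ws \<Longrightarrow> (P @ ws @ S) ! (length P + i) = ws ! i"
  by (simp add: nth_append)

lemma nt2: "Suc i < length ws \<Longrightarrow> (P @ ws @ S) ! Suc (length P + i) = ws ! Suc i"
  by (simp add: nth_append)
lemma dr2: "Suc (Suc i) \<le> length ws \<Longrightarrow> drop (Suc (Suc (length P + i))) (P @ ws @ S) = drop (Suc (Suc i)) ws @ S"
  by simp
lemma dr1: "Suc i \<le> length ws \<Longrightarrow> drop (Suc (length P + i)) (P @ ws @ S) = drop (Suc i) ws @ S"
  by simp

lemma apply_frame:
  assumes "apply_gate g ws = Some ws'"
  shows "apply_gate (shg (length P) g) (P @ ws @ S) = Some (P @ ws' @ S)"
  using assms
  by (cases g) (auto simp: tk dr nt nt2 dr1 dr2 nth_append Suc_le_eq simp del: append_assoc split: if_splits)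

lemma run_frame:
  "run_circuit c ws = Some ws' \<Longrightarrow>
   run_circuit (map (shg (length P)) c) (P @ ws @ S) = Some (P @ ws' @ S)"
proof (induction c arbitrary: ws)
  case Nil
  then show ?case by simp
next
  case (Cons g c)
  then obtain w where w: "apply_gate g ws = Some w" "run_circuit c w = Some ws'"
    by (auto split: option.splits)
  show ?case using apply_frame[OF w(1), of P S] Cons.IH[OF w(2)] by simp
qed

lemma shg0[simp]: "map (shg 0) c = c"
proof -
  have "shg 0 g = g" for g by (cases g) auto
  then show ?thesis by (induction c) auto
qed

lemma run_frame':
  "run_circuit c ws = Some ws' \<Longrightarrow> length P = k \<Longrightarrow>
   run_circuit (map (shg k) c) (P @ ws @ S) = Some (P @ ws' @ S)"
  using run_frame by blast

lemma len_cm2: "length A = length B \<Longrightarrow> length (concat (map2 (\<lambda>a b. [a, b]) A B)) = 2 * length A"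
  by (induction A B rule: list_induct2) auto

lemma run_append:
  "run_circuit (c1 @ c2) ws = (case run_circuit c1 ws of None \<Rightarrow> None | Some w \<Rightarrow> run_circuit c2 w)"
  by (induction c1 arbitrary: ws) (auto split: option.splits)

lemma run_seq:
  "run_circuit c1 ws = Some w \<Longrightarrow> run_circuit c2 w = Some w' \<Longrightarrow> run_circuit (c1 @ c2) ws = Some w'"
  by (simp add: run_append)

lemma dual_rail_simps[simp]:
  "dual_rail [] = []"
  "dual_rail (x # xs) = x # (\<not> x) # dual_rail xs"
  "dual_rail (xs @ ys) = dual_rail xs @ dual_rail ys"
  by (auto simp: dual_rail_def)

definition travel_gadget :: "gate list" where
  "travel_gadget = [Cross 0, Fork 1, Dual 2, Cross 2, Dual 1, Cross 0, Cross 1,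
     Fork 2, Dual 3, Cross 3, Dual 2,
     Cross 0, Fork 0, Fork 3, Cross 4, Fork 4, Cross 3, Cross 2, Cross 1, Fork 3, Cross 2, Cross 4, Cross 3,
     Merge 0, Merge 1, Merge 2, Merge 3]"

lemma travel_gadget:
  "run_circuit travel_gadget [y, \<not> y, a, \<not> a, b, \<not> b] =
     Some [if y then a else b, \<not> (if y then a else b), y, \<not> y]"
  by (cases y; cases a; cases b) (simp_all add: travel_gadget_def)

lemma length_dual_rail[simp]: "length (dual_rail xs) = 2 * length xs"
  by (induction xs) auto

lemma travel:
  "\<exists>c. \<forall>y A B. length A = r \<longrightarrow> length B = r \<longrightarrow>
     run_circuit c ([y, \<not> y] @ dual_rail (concat (map2 (\<lambda>a b. [a, b]) A B))) =
     Some (dual_rail (map2 (\<lambda>a b. if y then a else b) A B) @ [y, \<not> y])"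
proof (induction r)
  case 0
  show ?case by (rule exI[of _ "[]"]) auto
next
  case (Suc r)
  then obtain c where c: "\<forall>y A B. length A = r \<longrightarrow> length B = r \<longrightarrow>
     run_circuit c ([y, \<not> y] @ dual_rail (concat (map2 (\<lambda>a b. [a, b]) A B))) =
     Some (dual_rail (map2 (\<lambda>a b. if y then a else b) A B) @ [y, \<not> y])" by blast
  show ?case
  proof (rule exI[of _ "travel_gadget @ map (shg 2) c"], intro allI impI)
    fix y and A B :: "bool list"
    assume "length A = Suc r" "length B = Suc r"
    then obtain a A' b B' where AB: "A = a # A'" "B = b # B'" "length A' = r" "length B' = r"
      by (cases A; cases B) auto
    define g where "g = (if y then a else b)"
    define R where "R = dual_rail (concat (map2 (\<lambda>a b. [a, b]) A' B'))"
    have 1: "run_circuit travel_gadget ([y, \<not> y, a, \<not> a, b, \<not> b] @ R) =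
        Some ([g, \<not> g, y, \<not> y] @ R)"
      using run_frame'[OF travel_gadget, where P="[]" and S=R and k=0] by (simp add: g_def)
    have 2: "run_circuit (map (shg 2) c) ([g, \<not> g, y, \<not> y] @ R) =
        Some ([g, \<not> g] @ dual_rail (map2 (\<lambda>a b. if y then a else b) A' B') @ [y, \<not> y])"
      using run_frame'[OF c[rule_format, OF AB(3,4)], where P="[g, \<not> g]" and S="[]" and k=2] by (simp add: R_def)
    show "run_circuit (travel_gadget @ map (shg 2) c)
            ([y, \<not> y] @ dual_rail (concat (map2 (\<lambda>a b. [a, b]) A B))) =
          Some (dual_rail (map2 (\<lambda>a b. if y then a else b) A B) @ [y, \<not> y])"
      using run_seq[OF 1 2] AB by (simp add: R_def g_def)
  qed
qed

fun gen :: "bool \<Rightarrow> gate list" where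
  "gen True = [Fork 0, Fork 2, Cross 1]"
| "gen False = [Fork 0, Fork 2, Cross 1, Cross 0]"

lemma gen: "run_circuit (gen b) [True, False] = Some [b, \<not> b, True, False]"
  by (cases b) simp_all

lemma base: "\<exists>c. run_circuit c [True, False] = Some (dual_rail bs @ [True, False])"
proof (induction bs)
  case Nil
  show ?case by (rule exI[of _ "[]"]) simp
next
  case (Cons b bs)
  then obtain c where c: "run_circuit c [True, False] = Some (dual_rail bs @ [True, False])" by blast
  have 2: "run_circuit (map (shg 2) c) ([b, \<not> b] @ [True, False] @ []) =
      Some ([b, \<not> b] @ (dual_rail bs @ [True, False]) @ [])"
    using run_frame'[OF c, where P="[b, \<not> b]" and S="[]" and k=2] by simp
  have 1: "run_circuit (gen b) [True, False] = Some ([b, \<not> b] @ [True, False] @ [])"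
    using gen by simp
  show ?case using run_seq[OF 1 2] by auto
qed

lemma map2_sel: "length A = length B \<Longrightarrow> map2 (\<lambda>a b. if y then a else b) A B = (if y then A else B)"
  by (induction A B rule: list_induct2) auto

lemma claim:
  "\<forall>r G. (\<forall>ys. length ys = n \<longrightarrow> length (G ys) = r) \<longrightarrow>
     (\<exists>c. \<forall>ys. length ys = n \<longrightarrow>
        run_circuit c (dual_rail (ys @ [True])) = Some (dual_rail (G ys @ [True])))"
proof (induction n)
  case 0
  show ?case
  proof (intro allI impI)
    fix r and G :: "bool list \<Rightarrow> bool list"
    obtain c where c: "run_circuit c [True, False] = Some (dual_rail (G []) @ [True, False])"
      using base by blast
    show "\<exists>c. \<forall>ys. length ys = 0 \<longrightarrow>
        run_circuit c (dual_rail (ys @ [True])) = Some (dual_rail (G ys @ [True]))"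
      using c by (intro exI[of _ c]) auto
  qed
next
  case (Suc n)
  show ?case
  proof (intro allI impI)
    fix r and G :: "bool list \<Rightarrow> bool list"
    assume len: "\<forall>ys. length ys = Suc n \<longrightarrow> length (G ys) = r"
    define G' where "G' = (\<lambda>ys. concat (map2 (\<lambda>a b. [a, b]) (G (True # ys)) (G (False # ys))))"
    have lenG': "\<forall>ys. length ys = n \<longrightarrow> length (G' ys) = 2 * r"
    proof (intro allI impI)
      fix ys :: "bool list" assume "length ys = n"
      then have "length (G (True # ys)) = r" "length (G (False # ys)) = r" using len by auto
      then show "length (G' ys) = 2 * r" unfolding G'_def using len_cm2 by metis
    qed
    obtain c1 where c1: "\<forall>ys. length ys = n \<longrightarrow>
        run_circuit c1 (dual_rail (ys @ [True])) = Some (dual_rail (G' ys @ [True]))"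
      using Suc.IH lenG' by blast
    obtain c2 where c2: "\<forall>y A B. length A = r \<longrightarrow> length B = r \<longrightarrow>
     run_circuit c2 ([y, \<not> y] @ dual_rail (concat (map2 (\<lambda>a b. [a, b]) A B))) =
     Some (dual_rail (map2 (\<lambda>a b. if y then a else b) A B) @ [y, \<not> y])"
      using travel by blast
    show "\<exists>c. \<forall>ys. length ys = Suc n \<longrightarrow>
        run_circuit c (dual_rail (ys @ [True])) = Some (dual_rail (G ys @ [True]))"
    proof (rule exI[of _ "map (shg 2) c1 @ c2 @ map (shg (2 * r)) [Dual 0, Merge 0]"], intro allI impI)
      fix ys :: "bool list" assume ly: "length ys = Suc n"
      then obtain y ys' where ys: "ys = y # ys'" "length ys' = n" by (cases ys) auto
      have lA: "length (G (True # ys')) = r" "length (G (False # ys')) = r" using len ys by auto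
      have 1: "run_circuit (map (shg 2) c1) (dual_rail (ys @ [True])) =
         Some ([y, \<not> y] @ dual_rail (G' ys') @ [True, False])"
        using run_frame'[OF c1[rule_format, OF ys(2)], where P="[y, \<not> y]" and S="[]" and k=2] ys by simp
      have 2: "run_circuit c2 ([y, \<not> y] @ dual_rail (G' ys') @ [True, False]) =
         Some (dual_rail (G ys) @ [y, \<not> y, True, False])"
        using run_frame'[OF c2[rule_format, OF lA, of y], where P="[]" and S="[True, False]" and k=0]
        by (cases y) (simp_all add: G'_def map2_sel[OF lA(1)[folded lA(2)]] ys)
      have 3: "run_circuit (map (shg (2 * r)) [Dual 0, Merge 0]) (dual_rail (G ys) @ [y, \<not> y, True, False]) =
         Some (dual_rail (G ys) @ [True, False])"
        using run_frame'[of "[Dual 0, Merge 0]" "[y, \<not> y, True, False]" "[True, False]" "dual_rail (G ys)" "2 * r" "[]"]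
          len ly by simp
      have "run_circuit (map (shg 2) c1 @ c2 @ map (shg (2 * r)) [Dual 0, Merge 0]) (dual_rail (ys @ [True]))
          = Some (dual_rail (G ys) @ [True, False])"
        using run_seq[OF 1 run_seq[OF 2 3]] ys by simp
      then show "run_circuit (map (shg 2) c1 @ c2 @ map (shg (2 * r)) [Dual 0, Merge 0]) (dual_rail (ys @ [True]))
          = Some (dual_rail (G ys @ [True]))" by simp
    qed
  qed
qed

lemma prep:
  "run_circuit [Fork 0, Fork 2, Cross 1, Fork 2, Fork 4, Cross 3, Merge 2, Dual 3] [z, \<not> z] =
   Some [z, \<not> z, True, False]"
  by (cases z) simp_all

theorem mainTheorem9:
  fixes f :: "bool list \<Rightarrow> bool" and n :: nat
  assumes "n \<ge> 1"
  shows "\<exists>c :: gate list. \<forall>xs. length xs = n \<longrightarrow>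
           run_circuit c (dual_rail xs) = Some [f xs, \<not> f xs]"
proof -
  obtain c where c: "\<forall>ys. length ys = n \<longrightarrow>
        run_circuit c (dual_rail (ys @ [True])) = Some (dual_rail ([f ys] @ [True]))"
    using claim[of n, THEN spec[where x=1], THEN spec[where x="\<lambda>ys. [f ys]"]] by auto
  show ?thesis
  proof (rule exI[of _ "map (shg (2 * (n - 1))) [Fork 0, Fork 2, Cross 1, Fork 2, Fork 4, Cross 3, Merge 2, Dual 3]
       @ c @ [Dual 2, Merge 1]"], intro allI impI)
    fix xs :: "bool list" assume lx: "length xs = n"
    then obtain zs z where xs: "xs = zs @ [z]" using assms
      by (metis One_nat_def Suc_le_D length_Suc_conv_rev)
    have lz: "length zs = n - 1" using lx xs by simp
    have 1: "run_circuit (map (shg (2 * (n - 1))) [Fork 0, Fork 2, Cross 1, Fork 2, Fork 4, Cross 3, Merge 2, Dual 3])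
        (dual_rail xs) = Some (dual_rail (xs @ [True]))"
      using run_frame'[OF prep, where P="dual_rail zs" and S="[]" and k="2 * (n - 1)"] lz xs by simp
    have 2: "run_circuit c (dual_rail (xs @ [True])) = Some [f xs, \<not> f xs, True, False]"
      using c lx by simp
    have 3: "run_circuit [Dual 2, Merge 1] [f xs, \<not> f xs, True, False] = Some [f xs, \<not> f xs]"
      by (cases "f xs") simp_all
    show "run_circuit (map (shg (2 * (n - 1))) [Fork 0, Fork 2, Cross 1, Fork 2, Fork 4, Cross 3, Merge 2, Dual 3]
       @ c @ [Dual 2, Merge 1]) (dual_rail xs) = Some [f xs, \<not> f xs]"
      using run_seq[OF 1 run_seq[OF 2 3]] .
  qed
qed

end
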